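(* Let $X$ be a topological space and $I$ a $Z_B$-ideal of $B_1(X)$. The following are equivalent: (1) $I$ is a prime ideal of $B_1(X)$; (2) $I$ contains a prime ideal of $B_1(X)$; (3) for all $f,g\in B_1(X)$, if $fg=0$ then $f\in I$ or $g\in I$; (4) for every $f\in B_1(X)$ there exists $Z\in Z_B[I]$ such that $f$ does not change sign on $Z$ (i.e. $f\ge 0$ on $Z$ or $f\le0$ on $Z$).
   Context: For a topological space $X$, $B_1(X)$ denotes the commutative ring (with pointwise operations) of all Baire one functions $f:X\to\mathbb{R}$, i.e. pointwise limits of sequences of continuous real-valued functions on $X$. For $f\in B_1(X)$, $Z(f)=\{x\in X: f(x)=0\}$. For an ideal $I$, $Z_B[I]=\{Z(f):f\in I\}$. All ideals are proper. An ideal $I$ of $B_1(X)$ is a $Z_B$-ideal if for all $f\in B_1(X)$: $f\in I \iff Z(f)\in Z_B[I]$. *)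

theory Defs
  imports "HOL-Analysis.Analysis" "HOL-Algebra.Ideal"
begin

text \<open>Baire one functions on a topological space X (given as an abstract topology).
  Functions are represented extensionally: they vanish outside topspace X.\<close>
definition baire_one :: "'a topology \<Rightarrow> ('a \<Rightarrow> real) set" where
  "baire_one X = {f. (\<forall>x. x \<notin> topspace X \<longrightarrow> f x = 0) \<and>
     (\<exists>fs::nat \<Rightarrow> 'a \<Rightarrow> real. (\<forall>n. continuous_map X euclideanreal (fs n)) \<and>
        (\<forall>x\<in>topspace X. (\<lambda>n. fs n x) \<longlonglongrightarrow> f x))}"

definition B1_ring :: "'a topology \<Rightarrow> ('a \<Rightarrow> real) ring" where
  "B1_ring X = \<lparr>carrier = baire_one X,
     monoid.mult = (\<lambda>f g x. f x * g x),
     one = (\<lambda>x. if x \<in> topspace X then 1 else 0),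
     zero = (\<lambda>x. 0),
     add = (\<lambda>f g x. f x + g x)\<rparr>"

definition zero_set :: "'a topology \<Rightarrow> ('a \<Rightarrow> real) \<Rightarrow> 'a set" where
  "zero_set X f = {x \<in> topspace X. f x = 0}"

definition ZB :: "'a topology \<Rightarrow> ('a \<Rightarrow> real) set \<Rightarrow> 'a set set" where
  "ZB X I = zero_set X ` I"

definition ZB_ideal :: "'a topology \<Rightarrow> ('a \<Rightarrow> real) set \<Rightarrow> bool" where
  "ZB_ideal X I \<longleftrightarrow> ideal I (B1_ring X) \<and> I \<noteq> carrier (B1_ring X) \<and>
     (\<forall>f \<in> baire_one X. f \<in> I \<longleftrightarrow> zero_set X f \<in> ZB X I)"

end

theory Submission
  imports Defs
begin

lemma B1_simps: "carrier (B1_ring X) = baire_one X"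
  "(f \<otimes>\<^bsub>B1_ring X\<^esub> g) = (\<lambda>x. f x * g x)"
  "(f \<oplus>\<^bsub>B1_ring X\<^esub> g) = (\<lambda>x. f x + g x)"
  "\<zero>\<^bsub>B1_ring X\<^esub> = (\<lambda>x. 0)"
  by (simp_all add: B1_ring_def)

lemma baire_max0: assumes "f \<in> baire_one X" shows "(\<lambda>x. max (f x) 0) \<in> baire_one X"
proof -
  obtain fs where c: "\<And>n. continuous_map X euclideanreal (fs n)"
    and l: "\<And>x. x\<in>topspace X \<Longrightarrow> (\<lambda>n. fs n x) \<longlonglongrightarrow> f x"
    and z: "\<And>x. x \<notin> topspace X \<Longrightarrow> f x = 0" using assms by (auto simp: baire_one_def)
  show ?thesis unfolding baire_one_def
    apply (intro CollectI conjI exI[of _ "\<lambda>n x. max (fs n x) 0"])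
    using z c l by (auto intro!: continuous_map_real_max tendsto_max)
qed

lemma baire_min0: assumes "f \<in> baire_one X" shows "(\<lambda>x. min (f x) 0) \<in> baire_one X"
proof -
  obtain fs where c: "\<And>n. continuous_map X euclideanreal (fs n)"
    and l: "\<And>x. x\<in>topspace X \<Longrightarrow> (\<lambda>n. fs n x) \<longlonglongrightarrow> f x"
    and z: "\<And>x. x \<notin> topspace X \<Longrightarrow> f x = 0" using assms by (auto simp: baire_one_def)
  show ?thesis unfolding baire_one_def
    apply (intro CollectI conjI exI[of _ "\<lambda>n x. min (fs n x) 0"])
    using z c l by (auto intro!: continuous_map_real_min tendsto_min)
qed

lemma baire_neg: assumes "f \<in> baire_one X" shows "(\<lambda>x. - f x) \<in> baire_one X"
proof -
  obtain fs where c: "\<And>n. continuous_map X euclideanreal (fs n)"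
    and l: "\<And>x. x\<in>topspace X \<Longrightarrow> (\<lambda>n. fs n x) \<longlonglongrightarrow> f x"
    and z: "\<And>x. x \<notin> topspace X \<Longrightarrow> f x = 0" using assms by (auto simp: baire_one_def)
  show ?thesis unfolding baire_one_def
    apply (intro CollectI conjI exI[of _ "\<lambda>n x. - fs n x"])
    using z c l by (auto intro!: continuous_map_minus tendsto_minus)
qed

theorem theorem2p16:
  fixes X :: "'a topology" and I :: "('a \<Rightarrow> real) set"
  assumes "ZB_ideal X I"
  shows "(primeideal I (B1_ring X) \<longleftrightarrow>
            (\<exists>P. primeideal P (B1_ring X) \<and> P \<subseteq> I))
       \<and> (primeideal I (B1_ring X) \<longleftrightarrow>
            (\<forall>f \<in> baire_one X. \<forall>g \<in> baire_one X.
               f \<otimes>\<^bsub>B1_ring X\<^esub> g = \<zero>\<^bsub>B1_ring X\<^esub> \<longrightarrow> f \<in> I \<or> g \<in> I))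
       \<and> (primeideal I (B1_ring X) \<longleftrightarrow>
            (\<forall>f \<in> baire_one X. \<exists>Z \<in> ZB X I.
               (\<forall>x \<in> Z. f x \<ge> 0) \<or> (\<forall>x \<in> Z. f x \<le> 0)))"
proof -
  let ?R = "B1_ring X"
  have id: "ideal I ?R" and ne: "I \<noteq> carrier ?R"
    and zb: "\<And>f. f \<in> baire_one X \<Longrightarrow> f \<in> I \<longleftrightarrow> zero_set X f \<in> ZB X I"
    using assms by (auto simp: ZB_ideal_def)
  have rR: "ring ?R" using id by (simp add: ideal_def)
  have Isub: "I \<subseteq> baire_one X" using ideal.Icarr[OF id] by (auto simp: B1_simps)
  have cR: "cring ?R"
    unfolding cring_def comm_monoid_def comm_monoid_axioms_def
    using rR ring.is_monoid[OF rR] by (auto simp: B1_simps mult.commute)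
  have lc: "\<And>a b. a \<in> I \<Longrightarrow> b \<in> baire_one X \<Longrightarrow> (\<lambda>x. b x * a x) \<in> I"
    using ideal.I_l_closed[OF id] by (auto simp: B1_simps)
  have ac: "\<And>a b. a \<in> I \<Longrightarrow> b \<in> I \<Longrightarrow> (\<lambda>x. a x + b x) \<in> I"
    using additive_subgroup.a_closed[OF ideal.axioms(1)[OF id]] by (auto simp: B1_simps)
  have 12: "primeideal I ?R \<Longrightarrow> (\<exists>P. primeideal P ?R \<and> P \<subseteq> I)" by blast
  have 23: "\<forall>f \<in> baire_one X. \<forall>g \<in> baire_one X.
               f \<otimes>\<^bsub>?R\<^esub> g = \<zero>\<^bsub>?R\<^esub> \<longrightarrow> f \<in> I \<or> g \<in> I"
    if HP: "\<exists>P. primeideal P ?R \<and> P \<subseteq> I"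
  proof (intro ballI impI)
    fix f g assume f: "f \<in> baire_one X" and g: "g \<in> baire_one X" and e: "f \<otimes>\<^bsub>?R\<^esub> g = \<zero>\<^bsub>?R\<^esub>"
    obtain P where P: "primeideal P ?R" "P \<subseteq> I" using HP by blast
    have "\<zero>\<^bsub>?R\<^esub> \<in> P" using additive_subgroup.zero_closed[OF ideal.axioms(1)[OF primeideal.axioms(1)[OF P(1)]]] .
    then have "f \<in> P \<or> g \<in> P" using primeideal.I_prime[OF P(1)] f g e by (simp add: B1_simps)
    then show "f \<in> I \<or> g \<in> I" using P(2) by blast
  qed
  have 34: "\<forall>f \<in> baire_one X. \<exists>Z \<in> ZB X I. (\<forall>x \<in> Z. f x \<ge> 0) \<or> (\<forall>x \<in> Z. f x \<le> 0)"
    if H: "\<forall>f \<in> baire_one X. \<forall>g \<in> baire_one X.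
               f \<otimes>\<^bsub>?R\<^esub> g = \<zero>\<^bsub>?R\<^esub> \<longrightarrow> f \<in> I \<or> g \<in> I"
  proof
    fix f assume f: "f \<in> baire_one X"
    let ?p = "\<lambda>x. max (f x) 0" and ?m = "\<lambda>x. min (f x) 0"
    have "?p \<otimes>\<^bsub>?R\<^esub> ?m = \<zero>\<^bsub>?R\<^esub>" by (auto simp: B1_simps max_def min_def)
    then have "?p \<in> I \<or> ?m \<in> I" using H baire_max0[OF f] baire_min0[OF f] by blast
    then show "\<exists>Z \<in> ZB X I. (\<forall>x \<in> Z. f x \<ge> 0) \<or> (\<forall>x \<in> Z. f x \<le> 0)"
    proof
      assume "?p \<in> I"
      then have "zero_set X ?p \<in> ZB X I" by (simp add: ZB_def)
      moreover have "\<forall>x \<in> zero_set X ?p. f x \<le> 0" by (auto simp: zero_set_def max_def split: if_splits)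
      ultimately show ?thesis by blast
    next
      assume "?m \<in> I"
      then have "zero_set X ?m \<in> ZB X I" by (simp add: ZB_def)
      moreover have "\<forall>x \<in> zero_set X ?m. f x \<ge> 0" by (auto simp: zero_set_def min_def split: if_splits)
      ultimately show ?thesis by blast
    qed
  qed
  have up: "h \<in> I" if a: "a \<in> I" and h: "h \<in> baire_one X" and sub: "zero_set X a \<subseteq> zero_set X h" for a h
  proof -
    have "(\<lambda>x. h x * a x) \<in> I" using lc a h by blast
    moreover have "zero_set X (\<lambda>x. h x * a x) = zero_set X h" using sub by (auto simp: zero_set_def)
    ultimately have "zero_set X h \<in> ZB X I" unfolding ZB_def by (metis image_eqI)
    then show ?thesis using zb h by blast
  qed
  have 41: "primeideal I ?R"
    if H: "\<forall>f \<in> baire_one X. \<exists>Z \<in> ZB X I. (\<forall>x \<in> Z. f x \<ge> 0) \<or> (\<forall>x \<in> Z. f x \<le> 0)"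
  proof (rule primeidealI[OF id cR ne[symmetric]])
    fix g h assume g: "g \<in> carrier ?R" and h: "h \<in> carrier ?R" and gh: "g \<otimes>\<^bsub>?R\<^esub> h \<in> I"
    have g': "g \<in> baire_one X" and h': "h \<in> baire_one X" using g h by (auto simp: B1_simps)
    have ghI: "(\<lambda>x. g x * h x) \<in> I" using gh by (simp add: B1_simps)
    have nh: "(\<lambda>x. - h x) \<in> carrier ?R" using baire_neg[OF h'] by (simp add: B1_simps)
    have "g \<otimes>\<^bsub>?R\<^esub> g \<oplus>\<^bsub>?R\<^esub> ((\<lambda>x. - h x) \<otimes>\<^bsub>?R\<^esub> h) \<in> carrier ?R"
      using g h nh rR by (meson ring.ring_simprules)
    moreover have "g \<otimes>\<^bsub>?R\<^esub> g \<oplus>\<^bsub>?R\<^esub> ((\<lambda>x. - h x) \<otimes>\<^bsub>?R\<^esub> h) = (\<lambda>x. g x * g x - h x * h x)"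
      by (simp add: B1_simps)
    ultimately have fB: "(\<lambda>x. g x * g x - h x * h x) \<in> baire_one X" by (simp add: B1_simps)
    obtain Z where Z: "Z \<in> ZB X I" and s: "(\<forall>x \<in> Z. g x * g x - h x * h x \<ge> 0) \<or> (\<forall>x \<in> Z. g x * g x - h x * h x \<le> 0)"
      using bspec[OF H fB] by blast
    obtain k where k: "k \<in> I" and Zk: "Z = zero_set X k" using Z by (auto simp: ZB_def)
    let ?a = "\<lambda>x. k x * k x + (g x * h x) * (g x * h x)"
    have aI: "?a \<in> I" using ac lc k ghI Isub by blast
    have za: "zero_set X ?a = {x \<in> topspace X. k x = 0 \<and> g x * h x = 0}"
      by (auto simp: zero_set_def add_nonneg_eq_0_iff)
    from s show "g \<in> I \<or> h \<in> I"
    proof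
      assume A: "\<forall>x \<in> Z. g x * g x - h x * h x \<ge> 0"
      have "zero_set X ?a \<subseteq> zero_set X h" unfolding za
      proof (intro subsetI)
        fix x assume "x \<in> {x \<in> topspace X. k x = 0 \<and> g x * h x = 0}"
        then have x: "x \<in> zero_set X k" "g x * h x = 0" by (auto simp: zero_set_def)
        with A[unfolded Zk] have "g x * g x - h x * h x \<ge> 0" by blast
        moreover have "h x * h x \<ge> 0" "g x * g x \<ge> 0" by simp_all
        ultimately have "h x = 0" using x(2) by (metis diff_0 mult_eq_0_iff neg_0_le_iff_le order_antisym_conv)
        then show "x \<in> zero_set X h" using x(1) by (simp add: zero_set_def)
      qed
      then show ?thesis using up aI h' by blast
    next
      assume A: "\<forall>x \<in> Z. g x * g x - h x * h x \<le> 0"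
      have "zero_set X ?a \<subseteq> zero_set X g" unfolding za
      proof (intro subsetI)
        fix x assume "x \<in> {x \<in> topspace X. k x = 0 \<and> g x * h x = 0}"
        then have x: "x \<in> zero_set X k" "g x * h x = 0" by (auto simp: zero_set_def)
        with A[unfolded Zk] have "g x * g x - h x * h x \<le> 0" by blast
        moreover have "h x * h x \<ge> 0" "g x * g x \<ge> 0" by simp_all
        ultimately have "g x = 0" using x(2) by (metis diff_0_right mult_eq_0_iff order_antisym_conv)
        then show "x \<in> zero_set X g" using x(1) by (simp add: zero_set_def)
      qed
      then show ?thesis using up aI g' by blast
    qed
  qed
  show ?thesis using 12 23 34 41 by blast
qed

end
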